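(* Let $\bar F^a,\bar F^b:\mathbb{R}^n\times\mathbb{R}^q\times\mathbb{R}_{>0}\to\mathbb{R}^n$ be closed-loop discrete-time models. If the pair $(\bar F^a,\bar F^b)$ is REPC, then $\bar F^a$ is REPMC with $\bar F^b$ (the pair is REPMC).
   Context: $\mathcal{K}_\infty$: continuous, strictly increasing, unbounded functions $\mathbb{R}_{\ge0}\to\mathbb{R}_{\ge0}$ vanishing at $0$. REPC: the pair $(\bar F^a,\bar F^b)$ is REPC if there exists $\phi\in\mathcal{K}_\infty$ such that for each $M,E\ge0$ there exist constants $K>0$, $T^*>0$ and $\rho\in\mathcal{K}_\infty$ with $|\bar F^a(x^a,e,T)-\bar F^b(x^b,e,T)|\le(1+KT)|x^a-x^b|+T\rho(T)(\max\{|x^a|,|x^b|\}+\phi(|e|))$ for all $|x^a|,|x^b|\le M$, $|e|\le E$, $T\in(0,T^* )$. REPMC: $\bar F^a$ is REPMC with $\bar F^b$ if there exists $\phi\in\mathcal{K}_\infty$ such that for each $M,E\ge0$ and $\mathcal{T},\eta>0$ there exist $T^*=T^*(M,E,\mathcal{T},\eta)>0$ and $\alpha:\mathbb{R}_{\ge0}\times\mathbb{R}_{\ge0}\to\mathbb{R}_{\ge0}\cup\{\infty\}$ with $\alpha(\cdot,T)$ nondecreasing for all $T\in[0,T^* )$ such that: $|x^a-x^b|\le\delta$ implies $|\bar F^a(x^a,e,T)-\bar F^b(x^b,e,T)|\le\alpha(\delta,T)$ for all $|x^a|,|x^b|\le M$, $|e|\le E$, $T\in(0,T^* )$; and for every sequence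 $T_0,T_1,\dots$ in $(0,T^* )$ and $k$ with $\sum_{i=0}^{k-1}T_i\le\mathcal{T}$, $\alpha^k(0,\{T_i\}):=\alpha(\cdots\alpha(\alpha(0,T_0),T_1)\cdots,T_{k-1})\le\eta M+\phi(E)$. *)

theory Defs
  imports "HOL-Analysis.Analysis" "HOL-Library.Extended_Real"
begin

definition Kinf :: "(real \<Rightarrow> real) \<Rightarrow> bool" where
  "Kinf f \<longleftrightarrow> continuous_on {0..} f \<and> strict_mono_on {0..} f \<and> f 0 = 0
     \<and> (\<forall>x\<ge>0. f x \<ge> 0) \<and> (\<forall>B. \<exists>x\<ge>0. f x > B)"

type_synonym ('n,'q) cl_model = "real^'n \<Rightarrow> real^'q \<Rightarrow> real \<Rightarrow> real^'n"

definition REPC :: "('n::finite,'q::finite) cl_model \<Rightarrow> ('n,'q) cl_model \<Rightarrow> bool" where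
  "REPC Fa Fb \<longleftrightarrow> (\<exists>\<phi>. Kinf \<phi> \<and>
     (\<forall>M E. M \<ge> 0 \<longrightarrow> E \<ge> 0 \<longrightarrow>
       (\<exists>K>0. \<exists>Tstar>0. \<exists>\<rho>. Kinf \<rho> \<and>
         (\<forall>xa xb e T. norm xa \<le> M \<longrightarrow> norm xb \<le> M \<longrightarrow> norm e \<le> E \<longrightarrow>
            0 < T \<longrightarrow> T < Tstar \<longrightarrow>
            norm (Fa xa e T - Fb xb e T)
              \<le> (1 + K * T) * norm (xa - xb)
                 + T * \<rho> T * (max (norm xa) (norm xb) + \<phi> (norm e))))))"

fun alpha_iter :: "(real \<Rightarrow> real \<Rightarrow> ereal) \<Rightarrow> (nat \<Rightarrow> real) \<Rightarrow> nat \<Rightarrow> ereal" where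
  "alpha_iter \<alpha> Ts 0 = 0"
| "alpha_iter \<alpha> Ts (Suc k) =
     (case alpha_iter \<alpha> Ts k of ereal r \<Rightarrow> \<alpha> r (Ts k) | _ \<Rightarrow> \<infinity>)"

definition REPMC :: "('n::finite,'q::finite) cl_model \<Rightarrow> ('n,'q) cl_model \<Rightarrow> bool" where
  "REPMC Fa Fb \<longleftrightarrow> (\<exists>\<phi>. Kinf \<phi> \<and>
     (\<forall>M E \<T> \<eta>. M \<ge> 0 \<longrightarrow> E \<ge> 0 \<longrightarrow> \<T> > 0 \<longrightarrow> \<eta> > 0 \<longrightarrow>
       (\<exists>Tstar>0. \<exists>\<alpha>::real \<Rightarrow> real \<Rightarrow> ereal.
          (\<forall>d T. 0 \<le> d \<longrightarrow> 0 \<le> T \<longrightarrow> \<alpha> d T \<ge> 0) \<and>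
          (\<forall>T. 0 \<le> T \<longrightarrow> T < Tstar \<longrightarrow> mono_on {0..} (\<lambda>d. \<alpha> d T)) \<and>
          (\<forall>xa xb e T d. 0 \<le> d \<longrightarrow> norm (xa - xb) \<le> d \<longrightarrow>
             norm xa \<le> M \<longrightarrow> norm xb \<le> M \<longrightarrow> norm e \<le> E \<longrightarrow>
             0 < T \<longrightarrow> T < Tstar \<longrightarrow>
             ereal (norm (Fa xa e T - Fb xb e T)) \<le> \<alpha> d T) \<and>
          (\<forall>Ts k. (\<forall>i. 0 < Ts i \<and> Ts i < Tstar) \<longrightarrow> (\<Sum>i<k. Ts i) \<le> \<T> \<longrightarrow>
             alpha_iter \<alpha> Ts k \<le> ereal (\<eta> * M + \<phi> E)))))"

end

theory Submission
  imports Defs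
begin

lemma Kinf_mono: "Kinf \<phi> \<Longrightarrow> 0 \<le> a \<Longrightarrow> a \<le> b \<Longrightarrow> \<phi> a \<le> \<phi> b"
  by (rule strict_mono_on_leD[of "{0..}"]) (auto simp: Kinf_def)

lemma Kinf_nn: "Kinf \<phi> \<Longrightarrow> 0 \<le> a \<Longrightarrow> 0 \<le> \<phi> a"
  by (simp add: Kinf_def)

lemma Kinf_cont: "Kinf \<phi> \<Longrightarrow> continuous_on {0..} \<phi>"
  by (simp add: Kinf_def)

lemma Kinf_0: "Kinf \<phi> \<Longrightarrow> \<phi> 0 = 0"
  by (simp add: Kinf_def)

theorem lemma2:
  fixes Fa Fb :: "real^'n \<Rightarrow> real^'q \<Rightarrow> real \<Rightarrow> real^'n"
  assumes "REPC Fa Fb"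
  shows "REPMC Fa Fb"
proof -
  obtain \<phi> where phi: "Kinf \<phi>" and H: "\<forall>M E. M \<ge> 0 \<longrightarrow> E \<ge> 0 \<longrightarrow>
       (\<exists>K>0. \<exists>Tstar>0. \<exists>\<rho>. Kinf \<rho> \<and>
         (\<forall>(xa::real^'n) (xb::real^'n) (e::real^'q) T. norm xa \<le> M \<longrightarrow> norm xb \<le> M \<longrightarrow> norm e \<le> E \<longrightarrow>
            0 < T \<longrightarrow> T < Tstar \<longrightarrow>
            norm (Fa xa e T - Fb xb e T)
              \<le> (1 + K * T) * norm (xa - xb)
                 + T * \<rho> T * (max (norm xa) (norm xb) + \<phi> (norm e))))"
    using assms unfolding REPC_def by blast
  have phimono: "\<And>a b. 0 \<le> a \<Longrightarrow> a \<le> b \<Longrightarrow> \<phi> a \<le> \<phi> b"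
    by (rule Kinf_mono[OF phi])
  have phinn: "\<And>a. 0 \<le> a \<Longrightarrow> 0 \<le> \<phi> a" by (rule Kinf_nn[OF phi])
  show ?thesis unfolding REPMC_def
  proof (rule exI[of _ \<phi>], intro conjI allI impI)
    show "Kinf \<phi>" by fact
    fix M E :: real and TT \<eta> :: real
    assume M: "M \<ge> 0" and E: "E \<ge> 0" and TT: "TT > 0" and eta: "\<eta> > 0"
    obtain K Tstar0 \<rho> where K: "K > 0" and T0: "Tstar0 > 0" and rho: "Kinf \<rho>" and
      B: "\<forall>(xa::real^'n) (xb::real^'n) (e::real^'q) T. norm xa \<le> M \<longrightarrow> norm xb \<le> M \<longrightarrow> norm e \<le> E \<longrightarrow>
            0 < T \<longrightarrow> T < Tstar0 \<longrightarrow>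
            norm (Fa xa e T - Fb xb e T)
              \<le> (1 + K * T) * norm (xa - xb)
                 + T * \<rho> T * (max (norm xa) (norm xb) + \<phi> (norm e))"
      using H[rule_format, OF M E] by blast
    have rhonn: "\<And>a. 0 \<le> a \<Longrightarrow> 0 \<le> \<rho> a" by (rule Kinf_nn[OF rho])
    define \<epsilon> where "\<epsilon> = min \<eta> 1 / (exp (K * TT) * TT)"
    have epos: "\<epsilon> > 0" using eta TT unfolding \<epsilon>_def by auto
    have rc: "continuous_on {0..} \<rho>" using rho by (rule Kinf_cont)
    have r0: "\<rho> 0 = 0" using rho by (rule Kinf_0)
    then obtain \<delta> where dpos: "\<delta> > 0" and dH: "\<forall>x\<in>{0..}. dist x 0 < \<delta> \<longrightarrow> dist (\<rho> x) (\<rho> 0) < \<epsilon>"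
      using rc[unfolded continuous_on_iff, rule_format, of 0 \<epsilon>] epos by auto
    define Tstar where "Tstar = min Tstar0 \<delta>"
    have rsmall: "\<And>t. 0 \<le> t \<Longrightarrow> t < Tstar \<Longrightarrow> \<rho> t \<le> \<epsilon>"
    proof -
      fix t :: real assume "0 \<le> t" "t < Tstar"
      then have "dist (\<rho> t) (\<rho> 0) < \<epsilon>" using dH unfolding Tstar_def by (auto simp: dist_real_def)
      then show "\<rho> t \<le> \<epsilon>" using r0 by (auto simp: dist_real_def)
    qed
    define C where "C = M + \<phi> E"
    have Cnn: "C \<ge> 0" using M phinn[OF E] unfolding C_def by simp
    define \<alpha> :: "real \<Rightarrow> real \<Rightarrow> ereal" where "\<alpha> = (\<lambda>d T. ereal ((1 + K * T) * d + T * \<rho> T * C))"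
    show "\<exists>Tstar>0. \<exists>\<alpha>::real \<Rightarrow> real \<Rightarrow> ereal.
          (\<forall>d T. 0 \<le> d \<longrightarrow> 0 \<le> T \<longrightarrow> \<alpha> d T \<ge> 0) \<and>
          (\<forall>T. 0 \<le> T \<longrightarrow> T < Tstar \<longrightarrow> mono_on {0..} (\<lambda>d. \<alpha> d T)) \<and>
          (\<forall>(xa::real^'n) (xb::real^'n) (e::real^'q) T d. 0 \<le> d \<longrightarrow> norm (xa - xb) \<le> d \<longrightarrow>
             norm xa \<le> M \<longrightarrow> norm xb \<le> M \<longrightarrow> norm e \<le> E \<longrightarrow>
             0 < T \<longrightarrow> T < Tstar \<longrightarrow>
             ereal (norm (Fa xa e T - Fb xb e T)) \<le> \<alpha> d T) \<and>
          (\<forall>Ts k. (\<forall>i. 0 < Ts i \<and> Ts i < Tstar) \<longrightarrow> (\<Sum>i<k. Ts i) \<le> TT \<longrightarrow>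
             alpha_iter \<alpha> Ts k \<le> ereal (\<eta> * M + \<phi> E))"
    proof (rule exI[of _ Tstar], intro conjI exI[of _ \<alpha>] allI impI)
      show "Tstar > 0" using T0 dpos unfolding Tstar_def by simp
    next
      fix d T :: real assume "0 \<le> d" "0 \<le> T"
      then show "\<alpha> d T \<ge> 0" unfolding \<alpha>_def using K Cnn rhonn[of T] by simp
    next
      fix T :: real assume "0 \<le> T" "T < Tstar"
      then show "mono_on {0..} (\<lambda>d. \<alpha> d T)" unfolding \<alpha>_def using K
        by (intro mono_onI) (simp add: mult_left_mono)
    next
      fix xa xb :: "real^'n" and e :: "real^'q" and T d :: real
      assume d: "0 \<le> d" "norm (xa - xb) \<le> d" and xa: "norm xa \<le> M" and xb: "norm xb \<le> M"
        and e: "norm e \<le> E" and T: "0 < T" "T < Tstar"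
      have "norm (Fa xa e T - Fb xb e T) \<le> (1 + K * T) * norm (xa - xb)
                 + T * \<rho> T * (max (norm xa) (norm xb) + \<phi> (norm e))"
        using B xa xb e T unfolding Tstar_def by auto
      also have "\<dots> \<le> (1 + K * T) * d + T * \<rho> T * C"
      proof (rule add_mono)
        show "(1 + K * T) * norm (xa - xb) \<le> (1 + K * T) * d"
          using d K T by (intro mult_left_mono) auto
        have "max (norm xa) (norm xb) + \<phi> (norm e) \<le> C"
          unfolding C_def using xa xb phimono[OF norm_ge_zero e] by simp
        then show "T * \<rho> T * (max (norm xa) (norm xb) + \<phi> (norm e)) \<le> T * \<rho> T * C"
          using T rhonn[of T] by (intro mult_left_mono) auto
      qed
      finally show "ereal (norm (Fa xa e T - Fb xb e T)) \<le> \<alpha> d T" unfolding \<alpha>_def by simp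
    next
      fix Ts :: "nat \<Rightarrow> real" and k :: nat
      assume Ts: "\<forall>i. 0 < Ts i \<and> Ts i < Tstar" and sk: "(\<Sum>i<k. Ts i) \<le> TT"
      define S where "S = (\<lambda>k. \<Sum>i<k. Ts i)"
      have Snn: "\<And>k. S k \<ge> 0" unfolding S_def using Ts by (simp add: less_imp_le sum_nonneg)
      have ind: "\<exists>a. alpha_iter \<alpha> Ts j = ereal a \<and> 0 \<le> a \<and> a \<le> exp (K * S j) * S j * \<epsilon> * C" for j
      proof (induction j)
        case 0
        then show ?case by (simp add: S_def zero_ereal_def)
      next
        case (Suc j)
        then obtain a where a: "alpha_iter \<alpha> Ts j = ereal a" "0 \<le> a" "a \<le> exp (K * S j) * S j * \<epsilon> * C"
          by blast
        define t where "t = Ts j"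
        have t: "0 < t" "t < Tstar" using Ts unfolding t_def by auto
        have SS: "S (Suc j) = S j + t" unfolding S_def t_def by simp
        have rt: "0 \<le> \<rho> t" "\<rho> t \<le> \<epsilon>" using rhonn rsmall t by auto
        have e1: "1 + K * t \<le> exp (K * t)" by (rule exp_ge_add_one_self)
        have e2: "1 \<le> exp (K * S (Suc j))" using K Snn by simp
        have b: "alpha_iter \<alpha> Ts (Suc j) = ereal ((1 + K * t) * a + t * \<rho> t * C)"
          using a unfolding \<alpha>_def t_def by simp
        have "(1 + K * t) * a \<le> exp (K * t) * (exp (K * S j) * S j * \<epsilon> * C)"
          using a e1 K t by (intro mult_mono) auto
        also have "\<dots> = exp (K * S (Suc j)) * S j * \<epsilon> * C"
          unfolding SS by (simp add: distrib_left mult_exp_exp)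
        finally have p1: "(1 + K * t) * a \<le> exp (K * S (Suc j)) * S j * \<epsilon> * C" .
        have "t * \<rho> t * C \<le> t * \<epsilon> * C" using rt t Cnn by (intro mult_right_mono mult_left_mono) auto
        also have "\<dots> \<le> exp (K * S (Suc j)) * t * \<epsilon> * C"
          using e2 t epos Cnn by (simp add: mult_right_mono)
        finally have p2: "t * \<rho> t * C \<le> exp (K * S (Suc j)) * t * \<epsilon> * C" .
        have "(1 + K * t) * a + t * \<rho> t * C \<le> exp (K * S (Suc j)) * S (Suc j) * \<epsilon> * C"
          using p1 p2 unfolding SS by (simp add: algebra_simps)
        moreover have "0 \<le> (1 + K * t) * a + t * \<rho> t * C" using a K t rt Cnn by simp
        ultimately show ?case using b by blast
      qed
      then obtain a where a: "alpha_iter \<alpha> Ts k = ereal a" "0 \<le> a" "a \<le> exp (K * S k) * S k * \<epsilon> * C"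
        by blast
      have Sk: "S k \<le> TT" using sk unfolding S_def .
      have "exp (K * S k) * S k \<le> exp (K * TT) * TT"
        using Sk Snn[of k] K by (intro mult_mono) auto
      then have "exp (K * S k) * S k * \<epsilon> * C \<le> exp (K * TT) * TT * \<epsilon> * C"
        using epos Cnn by (intro mult_right_mono) auto
      also have "\<dots> = min \<eta> 1 * C" unfolding \<epsilon>_def using TT by simp
      also have "\<dots> \<le> \<eta> * M + \<phi> E"
      proof -
        have m1: "min \<eta> 1 * M \<le> \<eta> * M" using M by (intro mult_right_mono) simp_all
        have m2: "min \<eta> 1 * \<phi> E \<le> \<phi> E"
          using phinn[OF E] eta by (intro mult_left_le_one_le) simp_all
        show ?thesis unfolding C_def distrib_left using m1 m2 by linarith
      qed
      finally show "alpha_iter \<alpha> Ts k \<le> ereal (\<eta> * M + \<phi> E)" using a by simp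
    qed
  qed
qed

end
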